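(* Let $n\geq 2$, let $A\in\mathbb{R}^{n\times n}$ be a symmetric matrix and $e\in\mathbb{R}^n$ a vector. Then $$|e|^4|A|^2\geq 2|e|^2|Ae|^2+\frac{\big(|e|^2\operatorname{tr}(A)-\langle e,Ae\rangle\big)^2}{n-1}-\langle e,Ae\rangle^2.$$ If $n=2$, equality holds.
   Context: $|A|$ denotes the Hilbert–Schmidt (Frobenius) norm of $A$, $|A|^2=\operatorname{tr}(A^\intercal A)$. *)

theory Defs
  imports "HOL-Analysis.Analysis"
begin

definition hs_norm_sq :: "real^'n^'n \<Rightarrow> real" where
  "hs_norm_sq A = trace (transpose A ** A)"

end

theory Submission
  imports Defs
begin

definition outer :: "real^'n \<Rightarrow> real^'n \<Rightarrow> real^'n^'n" where
  "outer x y = (\<chi> i j. x$i * y$j)"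

lemma outer_outer: "outer x y \<bullet> outer u v = (x \<bullet> u) * (y \<bullet> v)"
  apply (simp add: outer_def inner_vec_def sum_distrib_left sum_distrib_right mult_ac)
  by (rule sum.swap)

lemma mat_outer: "A \<bullet> outer x y = x \<bullet> (A *v y)"
  by (simp add: outer_def inner_vec_def matrix_vector_mult_def sum_distrib_left mult_ac)

lemma id_mat: "mat 1 \<bullet> A = trace (A::real^'n^'n)"
  unfolding inner_vec_def mat_def trace_def
  by (simp add: if_distrib[where f="\<lambda>c. c * _"] cong: if_cong)

lemma hs_inner: "hs_norm_sq A = A \<bullet> A"
  apply (simp add: hs_norm_sq_def trace_def inner_vec_def matrix_matrix_mult_def transpose_def
      power2_eq_square)
  by (rule sum.swap)

lemma sym_dot: fixes A :: "real^'n^'n" assumes "transpose A = A" shows "e \<bullet> (A *v w) = (A *v e) \<bullet> w"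
proof -
  have "(A *v e) \<bullet> w = (e v* transpose A) \<bullet> w" by (simp only: vector_transpose_matrix)
  also have "\<dots> = e \<bullet> (transpose A *v w)" by (rule dot_lmul_matrix)
  also have "\<dots> = e \<bullet> (A *v w)" by (simp only: assms)
  finally show ?thesis by (rule sym)
qed

lemma outer_mat: "outer x y \<bullet> A = x \<bullet> (A *v y)"
  by (simp only: inner_commute[of "outer x y" A] mat_outer)

lemma id_outer: "(mat 1::real^'n^'n) \<bullet> outer x y = x \<bullet> y"
  by (simp add: mat_outer)

lemma outer_id: "outer x y \<bullet> (mat 1::real^'n^'n) = x \<bullet> y"
  by (simp add: outer_mat)

lemma id_id: "mat 1 \<bullet> (mat 1 :: real^'n^'n) = real CARD('n)"
  by (simp add: id_mat trace_I)

lemma p4: "(x::real) ^ 4 = (x^2)^2"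
  by (simp add: power2_eq_square power4_eq_xxxx)

lemma main_ineq:
  fixes A :: "real^'n^'n" and e :: "real^'n"
  assumes "CARD('n) \<ge> 2" and sym: "transpose A = A"
  shows "norm e ^ 4 * hs_norm_sq A \<ge>
           2 * norm e ^ 2 * norm (A *v e) ^ 2
           + (norm e ^ 2 * trace A - e \<bullet> (A *v e)) ^ 2 / (real CARD('n) - 1)
           - (e \<bullet> (A *v e)) ^ 2"
proof (cases "e = 0")
  case True then show ?thesis by simp
next
  case False
  define s where "s = e \<bullet> e"
  define w where "w = A *v e"
  define a where "a = e \<bullet> w"
  define n where "n = real CARD('n)"
  define P where "P = s *\<^sub>R mat 1 - outer e e"
  define D where "D = (s^2) *\<^sub>R A - s *\<^sub>R (outer e w + outer w e) + a *\<^sub>R outer e e"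
  have s0: "s > 0" using False by (simp add: s_def)
  have n1: "n - 1 > 0" using assms(1) by (simp add: n_def)
  have ew: "e \<bullet> (A *v w) = w \<bullet> w" using sym_dot[OF sym, of e w] by (simp add: w_def)
  have we: "w \<bullet> (A *v e) = w \<bullet> w" by (simp add: w_def)
  have ee: "e \<bullet> (A *v e) = a" by (simp add: a_def w_def)
  have ww: "w \<bullet> (A *v w) = (A *v w) \<bullet> w" using sym_dot[OF sym, of w w] by (simp add: w_def)
  have PD: "P \<bullet> D = s^2 * (s * trace A - a)"
    unfolding P_def D_def
    apply (simp add: inner_add_left inner_add_right inner_diff_left inner_diff_right
        outer_outer mat_outer[of A] outer_mat[of _ _ A] id_outer outer_id id_mat[of A] id_id ew we ee s_def[symmetric] a_def[symmetric]
        inner_commute[of w e] power2_eq_square)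
    done
  have PP: "P \<bullet> P = s^2 * (n - 1)"
    unfolding P_def
    apply (simp add: inner_add_left inner_add_right inner_diff_left inner_diff_right
        outer_outer mat_outer[of A] outer_mat[of _ _ A] id_outer outer_id id_mat[of A] id_id s_def[symmetric] n_def
        power2_eq_square right_diff_distrib)
    done
  have DD: "D \<bullet> D = s^2 * (s^2 * hs_norm_sq A - 2 * s * (w \<bullet> w) + a^2)"
    unfolding D_def
    apply (simp add: inner_add_left inner_add_right inner_diff_left inner_diff_right
        outer_outer mat_outer[of A] outer_mat[of _ _ A] id_outer outer_id hs_inner ew we ee s_def[symmetric] a_def[symmetric]
        inner_commute[of w e] power2_eq_square)
    by algebra
  have CS: "(P \<bullet> D)^2 \<le> (P \<bullet> P) * (D \<bullet> D)" by (rule Cauchy_Schwarz_ineq)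
  define T where "T = s * trace A - a"
  define X where "X = s^2 * hs_norm_sq A - 2 * s * (w \<bullet> w) + a^2"
  have "(s^2 * T)^2 \<le> (s^2 * (n - 1)) * (s^2 * X)"
    using CS unfolding PD PP DD T_def X_def .
  moreover have "(s^2 * T)^2 = s^4 * T^2" "(s^2 * (n - 1)) * (s^2 * X) = s^4 * ((n - 1) * X)"
     apply (simp only: power_mult_distrib p4)
  proof -
    have "(s::real)^4 = s^2 * s^2" by (simp add: power2_eq_square power4_eq_xxxx)
    then show "(s^2 * (n - 1)) * (s^2 * X) = s^4 * ((n - 1) * X)" by (simp add: mult_ac)
  qed
  ultimately have "s^4 * T^2 \<le> s^4 * ((n - 1) * X)" by simp
  then have "T^2 \<le> (n - 1) * X" using s0 by simp
  then have TX: "T^2 / (n - 1) \<le> X" using n1 by (simp add: divide_simps mult.commute)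
  have ne: "norm e ^ 2 = s" by (simp add: s_def power2_norm_eq_inner)
  have ne4: "norm e ^ 4 = s^2" unfolding s_def
    by (simp only: p4 power2_norm_eq_inner)
  have nw: "norm (A *v e) ^ 2 = w \<bullet> w" by (simp add: w_def power2_norm_eq_inner)
  have fin: "2 * s * (w \<bullet> w) + T^2 / (n - 1) - a^2 \<le> s^2 * hs_norm_sq A"
    using TX unfolding X_def by linarith
  have eq1: "2 * norm e ^ 2 * norm (A *v e) ^ 2
           + (norm e ^ 2 * trace A - e \<bullet> (A *v e)) ^ 2 / (real CARD('n) - 1)
           - (e \<bullet> (A *v e)) ^ 2 = 2 * s * (w \<bullet> w) + T^2 / (n - 1) - a^2"
    by (simp only: ne nw ee n_def T_def)
  have eq2: "norm e ^ 4 * hs_norm_sq A = s^2 * hs_norm_sq A" by (simp only: ne4)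
  show ?thesis unfolding eq1 eq2 by (rule fin)
qed

lemma eq_two:
  fixes A :: "real^'n^'n" and e :: "real^'n"
  assumes c2: "CARD('n) = 2" and sym: "transpose A = A"
  shows "norm e ^ 4 * hs_norm_sq A =
           2 * norm e ^ 2 * norm (A *v e) ^ 2
           + (norm e ^ 2 * trace A - e \<bullet> (A *v e)) ^ 2 / (real CARD('n) - 1)
           - (e \<bullet> (A *v e)) ^ 2"
proof -
  obtain i j :: 'n where U: "(UNIV::'n set) = {i, j}" and ij: "i \<noteq> j"
    using c2 unfolding card_2_iff by blast
  have S: "\<And>f :: 'n \<Rightarrow> real. sum f UNIV = f i + f j" unfolding U using ij by simp
  have Aji: "A $ j $ i = A $ i $ j"
  proof -
    have "transpose A $ i $ j = A $ i $ j" using sym by simp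
    then show ?thesis by (simp add: transpose_def)
  qed
  have n4: "norm e ^ 4 = (e \<bullet> e)^2"
    by (simp only: p4 power2_norm_eq_inner)
  have n2: "norm e ^ 2 = e \<bullet> e" "norm (A *v e) ^ 2 = (A *v e) \<bullet> (A *v e)"
    by (simp_all add: power2_norm_eq_inner)
  show ?thesis
    unfolding n4 n2 c2
    apply (simp add: S Aji hs_norm_sq_def trace_def inner_vec_def matrix_matrix_mult_def
        matrix_vector_mult_def transpose_def)
    by algebra
qed

theorem lemma2p1:
  fixes A :: "real^'n^'n" and e :: "real^'n"
  assumes "CARD('n) \<ge> 2" and "transpose A = A"
  shows "(norm e ^ 4 * hs_norm_sq A \<ge>
           2 * norm e ^ 2 * norm (A *v e) ^ 2
           + (norm e ^ 2 * trace A - e \<bullet> (A *v e)) ^ 2 / (real CARD('n) - 1)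
           - (e \<bullet> (A *v e)) ^ 2) \<and>
         (CARD('n) = 2 \<longrightarrow> norm e ^ 4 * hs_norm_sq A =
           2 * norm e ^ 2 * norm (A *v e) ^ 2
           + (norm e ^ 2 * trace A - e \<bullet> (A *v e)) ^ 2 / (real CARD('n) - 1)
           - (e \<bullet> (A *v e)) ^ 2)"
  using main_ineq[OF assms] eq_two[OF _ assms(2)] by blast

end
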